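(* Let $n\ge 3$ and let $K_n$ be the complete graph on $n$ vertices. Then the distance eigenvalues of $K_n\otimes K_n$ are $(n-1)(n+3)$, $n-3$, $-3$ with multiplicities $1$, $2n-2$, $(n-1)^2$ respectively.
   Context: The Kronecker product $G\otimes H$ of simple graphs $G,H$ has vertex set $V(G)\times V(H)$, with $(x,y)$ adjacent to $(u,v)$ if and only if $xu\in E(G)$ and $yv\in E(H)$. Distance eigenvalues are the eigenvalues of the distance matrix, whose $(u,v)$ entry is the length of a shortest $u$–$v$ path. *)

theory Defs
  imports "Jordan_Normal_Form.Char_Poly"
begin

text \<open>Simple graphs are given by a symmetric irreflexive adjacency relation.\<close>

definition complete_graph :: "nat \<Rightarrow> nat \<Rightarrow> nat \<Rightarrow> bool" where
  "complete_graph n u v \<longleftrightarrow> u < n \<and> v < n \<and> u \<noteq> v"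

definition kronecker_graph ::
  "('a \<Rightarrow> 'a \<Rightarrow> bool) \<Rightarrow> ('b \<Rightarrow> 'b \<Rightarrow> bool) \<Rightarrow> ('a \<times> 'b) \<Rightarrow> ('a \<times> 'b) \<Rightarrow> bool" where
  "kronecker_graph G H p q \<longleftrightarrow> G (fst p) (fst q) \<and> H (snd p) (snd q)"

definition walk_of_length :: "('a \<Rightarrow> 'a \<Rightarrow> bool) \<Rightarrow> nat \<Rightarrow> 'a \<Rightarrow> 'a \<Rightarrow> bool" where
  "walk_of_length E k u v \<longleftrightarrow>
     (\<exists>p :: nat \<Rightarrow> 'a. p 0 = u \<and> p k = v \<and> (\<forall>i<k. E (p i) (p (Suc i))))"

text \<open>Length of a shortest u-v path (= shortest walk).\<close>
definition graph_dist :: "('a \<Rightarrow> 'a \<Rightarrow> bool) \<Rightarrow> 'a \<Rightarrow> 'a \<Rightarrow> nat" where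
  "graph_dist E u v = (LEAST k. walk_of_length E k u v)"

definition distance_matrix :: "('a \<Rightarrow> 'a \<Rightarrow> bool) \<Rightarrow> 'a list \<Rightarrow> real mat" where
  "distance_matrix E vs =
     mat (length vs) (length vs) (\<lambda>(i, j). real (graph_dist E (vs ! i) (vs ! j)))"

end

theory Submission
  imports Defs
begin


lemma divmod_lt: assumes "i < n*(n::nat)" shows "i div n < n \<and> i mod n < n"
proof -
  have "n > 0" using assms by (cases n) auto
  thus ?thesis using assms by (simp add: less_mult_imp_div_less)
qed

lemma bij_divmod: "bij_betw (\<lambda>k. (k div n, k mod (n::nat))) {..<n*n} ({..<n} \<times> {..<n})"
  proof (rule bij_betwI[where g="\<lambda>(a,b). a*n+b"])
    show "(\<lambda>k. (k div n, k mod n)) \<in> {..<n * n} \<rightarrow> {..<n} \<times> {..<n}"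
      using divmod_lt by auto
    show "(\<lambda>(a, b). a * n + b) \<in> {..<n} \<times> {..<n} \<rightarrow> {..<n * n}"
    proof
      fix x assume "x \<in> {..<n} \<times> {..<n}"
      then obtain a b where x: "x = (a,b)" "a < n" "b < n" by auto
      have "a*n + b < a*n + n" using x by simp
      also have "\<dots> = (a+1)*n" by simp
      also have "\<dots> \<le> n*n" using x by (metis Suc_eq_plus1 Suc_leI mult_le_mono1)
      finally show "(\<lambda>(a, b). a * n + b) x \<in> {..<n*n}" using x by simp
    qed
    show "\<And>x. x \<in> {..<n * n} \<Longrightarrow> (\<lambda>(a,b). a*n+b) ((\<lambda>k. (k div n, k mod n)) x) = x"
      by simp
    show "\<And>y. y \<in> {..<n} \<times> {..<n} \<Longrightarrow> (\<lambda>k. (k div n, k mod n)) ((\<lambda>(a,b). a*n+b) y) = y"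
      by auto
  qed

lemma sum_divmod:
  fixes f :: "nat \<Rightarrow> nat \<Rightarrow> 'b::comm_monoid_add"
  shows "(\<Sum>k<n*n. f (k div n) (k mod n)) = (\<Sum>a<n. \<Sum>b<n. f a b)"
proof -
  have bij: "bij_betw (\<lambda>k. (k div n, k mod n)) {..<n*n} ({..<n} \<times> {..<n})"
    by (rule bij_divmod)
  have "(\<Sum>k<n*n. f (k div n) (k mod n)) = (\<Sum>(a,b)\<in>{..<n} \<times> {..<n}. f a b)"
    using sum.reindex_bij_betw[OF bij, of "\<lambda>(a,b). f a b"] by simp
  also have "\<dots> = (\<Sum>a<n. \<Sum>b<n. f a b)" by (simp add: sum.cartesian_product)
  finally show ?thesis .
qed

lemma prod_divmod:
  fixes f :: "nat \<Rightarrow> nat \<Rightarrow> 'b::comm_monoid_mult"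
  shows "(\<Prod>k<n*n. f (k div n) (k mod n)) = (\<Prod>a<n. \<Prod>b<n. f a b)"
proof -
  have bij: "bij_betw (\<lambda>k. (k div n, k mod n)) {..<n*n} ({..<n} \<times> {..<n})"
    by (rule bij_divmod)
  have "(\<Prod>k<n*n. f (k div n) (k mod n)) = (\<Prod>(a,b)\<in>{..<n} \<times> {..<n}. f a b)"
    using prod.reindex_bij_betw[OF bij, of "\<lambda>(a,b). f a b"] by simp
  also have "\<dots> = (\<Prod>a<n. \<Prod>b<n. f a b)" by (simp add: prod.cartesian_product)
  finally show ?thesis .
qed


definition kron :: "nat \<Rightarrow> real mat \<Rightarrow> real mat \<Rightarrow> real mat" where
  "kron n A B = mat (n*n) (n*n) (\<lambda>(i,j). A $$ (i div n, j div n) * B $$ (i mod n, j mod n))"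

lemma kron_carrier[simp]: "kron n A B \<in> carrier_mat (n*n) (n*n)"
  by (simp add: kron_def)

lemma kron_mult:
  assumes "A \<in> carrier_mat n n" "B \<in> carrier_mat n n" "C \<in> carrier_mat n n" "E \<in> carrier_mat n n"
  shows "kron n A B * kron n C E = kron n (A*C) (B*E)"
proof (rule eq_matI)
  fix i j assume ij: "i < dim_row (kron n (A*C) (B*E))" "j < dim_col (kron n (A*C) (B*E))"
  hence i: "i < n*n" and j: "j < n*n" by (auto simp: kron_def)
  have "(kron n A B * kron n C E) $$ (i,j) = (\<Sum>k<n*n. (A $$ (i div n, k div n) * B $$ (i mod n, k mod n)) * (C $$ (k div n, j div n) * E $$ (k mod n, j mod n)))"
    using i j by (simp add: kron_def scalar_prod_def times_mat_def lessThan_atLeast0)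
  also have "\<dots> = (\<Sum>a<n. \<Sum>b<n. (A $$ (i div n, a) * B $$ (i mod n, b)) * (C $$ (a, j div n) * E $$ (b, j mod n)))"
    by (rule sum_divmod[where f = "\<lambda>a b. (A $$ (i div n, a) * B $$ (i mod n, b)) * (C $$ (a, j div n) * E $$ (b, j mod n))"])
  also have "\<dots> = (\<Sum>a<n. A $$ (i div n, a) * C $$ (a, j div n)) * (\<Sum>b<n. B $$ (i mod n, b) * E $$ (b, j mod n))"
    by (subst sum_product) (simp add: mult_ac)
  also have "\<dots> = kron n (A*C) (B*E) $$ (i,j)"
    using i j assms divmod_lt[OF i] divmod_lt[OF j]
    by (simp add: kron_def scalar_prod_def times_mat_def lessThan_atLeast0)
  finally show "(kron n A B * kron n C E) $$ (i,j) = kron n (A*C) (B*E) $$ (i,j)" .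
qed (auto simp: kron_def)



definition Mm :: "nat \<Rightarrow> real mat" where
  "Mm n = mat n n (\<lambda>(i,j). if i = j then 0 else 1)"
definition Qm :: "nat \<Rightarrow> real mat" where
  "Qm n = mat n n (\<lambda>(i,j). if j = 0 then 1 else (if i = 0 then 1 else 0) - (if i = j then 1 else 0))"
definition Qi :: "nat \<Rightarrow> real mat" where
  "Qi n = mat n n (\<lambda>(k,a). 1 / real n - (if k \<noteq> 0 \<and> a = k then 1 else 0))"
definition Lm :: "nat \<Rightarrow> real mat" where
  "Lm n = mat n n (\<lambda>(i,j). if i = j then (if i = 0 then real n - 1 else -1) else 0)"

lemma colsum_Q:
  assumes "j < n"
  shows "(\<Sum>a<n. (if j = 0 then 1 else (if a = 0 then 1 else 0) - (if a = j then 1 else 0)) :: real)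
     = (if j = 0 then real n else 0)"
  using assms by (simp add: sum_subtractf)

lemma Qi_Q: assumes "n > 0" shows "Qi n * Qm n = 1\<^sub>m n"
proof (rule eq_matI)
  fix k j assume "k < dim_row (1\<^sub>m n :: real mat)" "j < dim_col (1\<^sub>m n :: real mat)"
  hence k: "k < n" and j: "j < n" by auto
  have "(Qi n * Qm n) $$ (k,j) = (\<Sum>a<n. (1 / real n - (if k \<noteq> 0 \<and> a = k then 1 else 0)) *
     (if j = 0 then 1 else (if a = 0 then 1 else 0) - (if a = j then 1 else 0)))"
    using k j by (simp add: Qi_def Qm_def scalar_prod_def times_mat_def lessThan_atLeast0)
  also have "\<dots> = (1 / real n) * (\<Sum>a<n. (if j = 0 then 1 else (if a = 0 then 1 else 0) - (if a = j then 1 else 0)))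
     - (\<Sum>a<n. (if k \<noteq> 0 \<and> a = k then 1 else 0) * (if j = 0 then 1 else (if a = 0 then 1 else 0) - (if a = j then 1 else 0)))"
    by (simp add: left_diff_distrib sum_subtractf sum_distrib_left)
  also have "\<dots> = (1 / real n) * (if j = 0 then real n else 0)
     - (if k \<noteq> 0 then (if j = 0 then 1 else (if k = 0 then 1 else 0) - (if k = j then 1 else 0)) else 0)"
    using k j by (simp add: colsum_Q if_distrib[of "\<lambda>x. x * _"] cong: if_cong)
  also have "\<dots> = 1\<^sub>m n $$ (k,j)" using k j assms by auto
  finally show "(Qi n * Qm n) $$ (k,j) = 1\<^sub>m n $$ (k,j)" .
qed (auto simp: Qi_def Qm_def)

lemma Q_carrier[simp]: "Qm n \<in> carrier_mat n n" and Qi_carrier[simp]: "Qi n \<in> carrier_mat n n"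
  and M_carrier[simp]: "Mm n \<in> carrier_mat n n" and L_carrier[simp]: "Lm n \<in> carrier_mat n n"
  by (auto simp: Qm_def Qi_def Mm_def Lm_def)

lemma Q_Qi: assumes "n > 0" shows "Qm n * Qi n = 1\<^sub>m n"
  using mat_mult_left_right_inverse[OF Qi_carrier Q_carrier Qi_Q[OF assms]] .

lemma M_Q: assumes "n > 0" shows "Mm n * Qm n = Qm n * Lm n"
proof (rule eq_matI)
  fix i j assume "i < dim_row (Qm n * Lm n)" "j < dim_col (Qm n * Lm n)"
  hence i: "i < n" and j: "j < n" by (auto simp: Qm_def Lm_def)
  have "(Mm n * Qm n) $$ (i,j) = (\<Sum>a<n. (if i = a then 0 else 1) *
     (if j = 0 then 1 else (if a = 0 then 1 else 0) - (if a = j then 1 else 0)))"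
    using i j by (simp add: Mm_def Qm_def scalar_prod_def times_mat_def lessThan_atLeast0)
  also have "\<dots> = (\<Sum>a<n. (if j = 0 then 1 else (if a = 0 then 1 else 0) - (if a = j then 1 else 0)))
       - (\<Sum>a<n. (if i = a then 1 else 0) * (if j = 0 then 1 else (if a = 0 then 1 else 0) - (if a = j then 1 else 0)))"
    by (subst sum_subtractf[symmetric]) (rule sum.cong, auto)
  also have "\<dots> = (if j = 0 then real n else 0) - (if j = 0 then 1 else (if i = 0 then 1 else 0) - (if i = j then 1 else 0))"
    using i j by (simp add: colsum_Q if_distrib[of "\<lambda>x. x * _"] cong: if_cong)
  also have "\<dots> = (Qm n * Lm n) $$ (i,j)"
  proof -
    have "(Qm n * Lm n) $$ (i,j) = (\<Sum>a<n. (if a = 0 then 1 else (if i = 0 then 1 else 0) - (if i = a then 1 else 0)) *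
       (if a = j then (if a = 0 then real n - 1 else -1) else 0))"
      using i j by (simp add: Lm_def Qm_def scalar_prod_def times_mat_def lessThan_atLeast0)
    also have "\<dots> = (if j = 0 then 1 else (if i = 0 then 1 else 0) - (if i = j then 1 else 0)) *
       (if j = 0 then real n - 1 else -1)"
      using j by (simp add: if_distrib[of "\<lambda>x. _ * x"] cong: if_cong)
    finally show ?thesis by auto
  qed
  finally show "(Mm n * Qm n) $$ (i,j) = (Qm n * Lm n) $$ (i,j)" .
qed (auto simp: Mm_def Qm_def Lm_def)

lemma M_decomp: assumes "n > 0" shows "Mm n = Qm n * Lm n * Qi n"
proof -
  have "Mm n = Mm n * (Qm n * Qi n)" using Q_Qi[OF assms] by (simp add: right_mult_one_mat[OF M_carrier])
  also have "\<dots> = (Mm n * Qm n) * Qi n" by (simp add: assoc_mult_mat[of _ n n _ n _ n])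
  finally show ?thesis using M_Q[OF assms] by simp
qed


lemma kron_one: "kron n (1\<^sub>m n) (1\<^sub>m n) = 1\<^sub>m (n*n)"
proof (rule eq_matI)
  fix i j assume "i < dim_row (1\<^sub>m (n*n) :: real mat)" "j < dim_col (1\<^sub>m (n*n) :: real mat)"
  hence i: "i < n*n" and j: "j < n*n" by auto
  have "i = j \<longleftrightarrow> i div n = j div n \<and> i mod n = j mod n"
    by (metis div_mult_mod_eq)
  thus "kron n (1\<^sub>m n) (1\<^sub>m n) $$ (i,j) = 1\<^sub>m (n*n) $$ (i,j)"
    using i j divmod_lt[OF i] divmod_lt[OF j] by (auto simp: kron_def)
qed (auto simp: kron_def)

lemma kron_conj:
  assumes "n > 0" "X \<in> carrier_mat n n" "Y \<in> carrier_mat n n"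
  shows "kron n (Qm n * X * Qi n) (Qm n * Y * Qi n) = kron n (Qm n) (Qm n) * kron n X Y * kron n (Qi n) (Qi n)"
proof -
  have QX: "Qm n * X \<in> carrier_mat n n" "Qm n * Y \<in> carrier_mat n n"
    using assms mult_carrier_mat[OF Q_carrier] by blast+
  have "kron n (Qm n) (Qm n) * kron n X Y = kron n (Qm n * X) (Qm n * Y)"
    by (rule kron_mult) (use assms in auto)
  moreover have "kron n (Qm n * X) (Qm n * Y) * kron n (Qi n) (Qi n) = kron n (Qm n * X * Qi n) (Qm n * Y * Qi n)"
    by (rule kron_mult) (use QX in auto)
  ultimately show ?thesis by simp
qed

lemma one_conj: assumes "n > 0" shows "1\<^sub>m n = Qm n * 1\<^sub>m n * Qi n"
  using Q_Qi[OF assms] by (simp add: right_mult_one_mat[OF Q_carrier])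


definition Dk :: "nat \<Rightarrow> real mat" where
  "Dk n = kron n (Mm n) (Mm n) + 2 \<cdot>\<^sub>m kron n (1\<^sub>m n) (Mm n) + 2 \<cdot>\<^sub>m kron n (Mm n) (1\<^sub>m n)"
definition Dg :: "nat \<Rightarrow> real mat" where
  "Dg n = kron n (Lm n) (Lm n) + 2 \<cdot>\<^sub>m kron n (1\<^sub>m n) (Lm n) + 2 \<cdot>\<^sub>m kron n (Lm n) (1\<^sub>m n)"

lemma conj_lin:
  fixes P X Y Z Pi :: "real mat"
  assumes C: "P \<in> carrier_mat N N" "Pi \<in> carrier_mat N N" "X \<in> carrier_mat N N" "Y \<in> carrier_mat N N" "Z \<in> carrier_mat N N"
  shows "P * (X + c \<cdot>\<^sub>m Y + d \<cdot>\<^sub>m Z) * Pi = P * X * Pi + c \<cdot>\<^sub>m (P * Y * Pi) + d \<cdot>\<^sub>m (P * Z * Pi)"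
proof -
  have "P * (X + c \<cdot>\<^sub>m Y + d \<cdot>\<^sub>m Z) = P * X + c \<cdot>\<^sub>m (P * Y) + d \<cdot>\<^sub>m (P * Z)"
    using C by (simp add: mult_add_distrib_mat[of _ N N _ N] mult_smult_distrib[of _ N N _ N] assoc_add_mat[of _ N N])
  moreover have "(P * X + c \<cdot>\<^sub>m (P * Y) + d \<cdot>\<^sub>m (P * Z)) * Pi = P * X * Pi + c \<cdot>\<^sub>m (P * Y * Pi) + d \<cdot>\<^sub>m (P * Z * Pi)"
    using C by (simp add: add_mult_distrib_mat[of _ N N _ _ N] mult_smult_assoc_mat[of _ N N _ N] assoc_add_mat[of _ N N])
  ultimately show ?thesis by simp
qed

lemma Dk_sim: assumes "n > 0"
  shows "Dk n = kron n (Qm n) (Qm n) * Dg n * kron n (Qi n) (Qi n)"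
proof -
  let ?P = "kron n (Qm n) (Qm n)" and ?Pi = "kron n (Qi n) (Qi n)"
  have e1: "kron n (Mm n) (Mm n) = ?P * kron n (Lm n) (Lm n) * ?Pi"
    using kron_conj[OF assms L_carrier L_carrier] M_decomp[OF assms] by simp
  have e2: "kron n (1\<^sub>m n) (Mm n) = ?P * kron n (1\<^sub>m n) (Lm n) * ?Pi"
  proof -
    have "kron n (1\<^sub>m n) (Mm n) = kron n (Qm n * 1\<^sub>m n * Qi n) (Qm n * Lm n * Qi n)"
      by (simp only: one_conj[OF assms, symmetric] M_decomp[OF assms, symmetric])
    thus ?thesis using kron_conj[OF assms one_carrier_mat L_carrier] by simp
  qed
  have e3: "kron n (Mm n) (1\<^sub>m n) = ?P * kron n (Lm n) (1\<^sub>m n) * ?Pi"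
  proof -
    have "kron n (Mm n) (1\<^sub>m n) = kron n (Qm n * Lm n * Qi n) (Qm n * 1\<^sub>m n * Qi n)"
      by (simp only: one_conj[OF assms, symmetric] M_decomp[OF assms, symmetric])
    thus ?thesis using kron_conj[OF assms L_carrier one_carrier_mat] by simp
  qed
  have C: "?P \<in> carrier_mat (n*n) (n*n)" "?Pi \<in> carrier_mat (n*n) (n*n)"
    "kron n (Lm n) (Lm n) \<in> carrier_mat (n*n) (n*n)"
    "kron n (1\<^sub>m n) (Lm n) \<in> carrier_mat (n*n) (n*n)"
    "kron n (Lm n) (1\<^sub>m n) \<in> carrier_mat (n*n) (n*n)" by auto
  show ?thesis unfolding Dk_def Dg_def e1 e2 e3
    using conj_lin[OF C] by simp
qed

lemma Dk_similar: assumes "n > 0" shows "similar_mat (Dk n) (Dg n)"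
proof -
  let ?P = "kron n (Qm n) (Qm n)" and ?Pi = "kron n (Qi n) (Qi n)"
  have "?P * ?Pi = 1\<^sub>m (n*n)" using kron_mult[of "Qm n" n "Qm n" "Qi n" "Qi n"] Q_Qi[OF assms] kron_one by simp
  moreover have "?Pi * ?P = 1\<^sub>m (n*n)" using kron_mult[of "Qi n" n "Qi n" "Qm n" "Qm n"] Qi_Q[OF assms] kron_one by simp
  moreover have "Dk n \<in> carrier_mat (n*n) (n*n)" "Dg n \<in> carrier_mat (n*n) (n*n)"
    by (auto simp: Dk_def Dg_def)
  moreover have "dim_row ?P = n*n" by (simp add: kron_def)
  ultimately have "similar_mat_wit (Dk n) (Dg n) ?P ?Pi"
    unfolding similar_mat_wit_def Let_def using Dk_sim[OF assms] by auto
  thus ?thesis unfolding similar_mat_def by blast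
qed

definition lam :: "nat \<Rightarrow> nat \<Rightarrow> real" where
  "lam n a = (if a = 0 then real n - 1 else -1)"

lemma Dg_entry: assumes "i < n*n" "j < n*n"
  shows "Dg n $$ (i,j) = (if i = j then lam n (i div n) * lam n (i mod n) + 2 * lam n (i mod n) + 2 * lam n (i div n) else 0)"
proof -
  have "i = j \<longleftrightarrow> i div n = j div n \<and> i mod n = j mod n"
    by (metis div_mult_mod_eq)
  thus ?thesis using assms divmod_lt[OF assms(1)] divmod_lt[OF assms(2)]
    by (auto simp: Dg_def kron_def Lm_def lam_def)
qed

lemma char_poly_Dg: assumes "n > 0"
  shows "char_poly (Dg n) = (\<Prod>a<n. \<Prod>b<n. [:- (lam n a * lam n b + 2 * lam n b + 2 * lam n a), 1:])"
proof -
  have C: "Dg n \<in> carrier_mat (n*n) (n*n)" by (auto simp: Dg_def)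
  have ut: "upper_triangular (Dg n)"
    unfolding upper_triangular_def using C Dg_entry by auto
  have "char_poly (Dg n) = (\<Prod>a \<leftarrow> diag_mat (Dg n). [:- a, 1:])"
    by (rule char_poly_upper_triangular[OF C ut])
  also have "\<dots> = (\<Prod>i \<leftarrow> [0..<n*n]. [:- (Dg n $$ (i,i)), 1:])"
    using C by (simp add: diag_mat_def comp_def)
  also have "\<dots> = (\<Prod>i<n*n. [:- (Dg n $$ (i,i)), 1:])"
    by (simp add: prod.distinct_set_conv_list[symmetric] lessThan_atLeast0)
  also have "\<dots> = (\<Prod>i<n*n. [:- (lam n (i div n) * lam n (i mod n) + 2 * lam n (i mod n) + 2 * lam n (i div n)), 1:])"
    by (rule prod.cong) (auto simp: Dg_entry)
  also have "\<dots> = (\<Prod>a<n. \<Prod>b<n. [:- (lam n a * lam n b + 2 * lam n b + 2 * lam n a), 1:])"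
    by (rule prod_divmod[where f = "\<lambda>a b. [:- (lam n a * lam n b + 2 * lam n b + 2 * lam n a), 1:]"])
  finally show ?thesis .
qed


lemma exists_other: assumes "(3::nat) \<le> n" shows "\<exists>x<n. x \<noteq> a \<and> x \<noteq> c"
proof -
  have "(0 \<noteq> a \<and> 0 \<noteq> c) \<or> (1 \<noteq> a \<and> 1 \<noteq> c) \<or> (2 \<noteq> a \<and> (2::nat) \<noteq> c)" by arith
  thus ?thesis
  proof (elim disjE)
    assume "0 \<noteq> a \<and> 0 \<noteq> c" thus ?thesis using assms by (intro exI[of _ 0]) auto
  next
    assume "1 \<noteq> a \<and> 1 \<noteq> c" thus ?thesis using assms by (intro exI[of _ 1]) auto
  next
    assume "2 \<noteq> a \<and> 2 \<noteq> c" thus ?thesis using assms by (intro exI[of _ 2]) auto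
  qed
qed

lemma dist_kk:
  assumes n: "3 \<le> n" and abcd: "a < n" "b < n" "c < n" "d < n"
  shows "graph_dist (kronecker_graph (complete_graph n) (complete_graph n)) (a,b) (c,d)
     = (if a = c \<and> b = d then 0 else if a \<noteq> c \<and> b \<noteq> d then 1 else 2)"
proof -
  let ?E = "kronecker_graph (complete_graph n) (complete_graph n)"
  have w0: "walk_of_length ?E 0 u v \<longleftrightarrow> u = v" for u v
    unfolding walk_of_length_def by auto
  have w1: "walk_of_length ?E 1 u v \<longleftrightarrow> ?E u v" for u v
  proof
    assume "walk_of_length ?E 1 u v" thus "?E u v" unfolding walk_of_length_def by auto
  next
    assume "?E u v" thus "walk_of_length ?E 1 u v" unfolding walk_of_length_def
      by (intro exI[of _ "\<lambda>i. if i = 0 then u else v"]) auto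
  qed
  show ?thesis
  proof (cases "a = c \<and> b = d")
    case True
    thus ?thesis unfolding graph_dist_def using w0 by simp
  next
    case F: False
    show ?thesis
    proof (cases "a \<noteq> c \<and> b \<noteq> d")
      case True
      have "(LEAST k. walk_of_length ?E k (a,b) (c,d)) = 1"
      proof (rule Least_equality)
        show "walk_of_length ?E 1 (a,b) (c,d)" using w1 True abcd
          by (simp add: kronecker_graph_def complete_graph_def)
        fix m assume "walk_of_length ?E m (a,b) (c,d)"
        thus "1 \<le> m" using w0 F by (cases m) auto
      qed
      thus ?thesis using True unfolding graph_dist_def by simp
    next
      case False
      obtain x where x: "x < n" "x \<noteq> a" "x \<noteq> c" using exists_other[OF n] by blast
      obtain y where y: "y < n" "y \<noteq> b" "y \<noteq> d" using exists_other[OF n] by blast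
      have "(LEAST k. walk_of_length ?E k (a,b) (c,d)) = 2"
      proof (rule Least_equality)
        show "walk_of_length ?E 2 (a,b) (c,d)" unfolding walk_of_length_def
        proof (intro exI[of _ "\<lambda>i. if i = 0 then (a,b) else if i = 1 then (x,y) else (c,d)"] conjI allI impI)
          fix i assume "i < (2::nat)"
          hence "i = 0 \<or> i = 1" by auto
          thus "?E ((\<lambda>i. if i = 0 then (a,b) else if i = 1 then (x,y) else (c,d)) i)
                   ((\<lambda>i. if i = 0 then (a,b) else if i = 1 then (x,y) else (c,d)) (Suc i))"
            using x y abcd by (auto simp: kronecker_graph_def complete_graph_def)
        qed auto
        fix m assume m: "walk_of_length ?E m (a,b) (c,d)"
        show "2 \<le> m"
        proof (rule ccontr)
          assume "\<not> 2 \<le> m"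
          hence "m = 0 \<or> m = 1" by auto
          thus False using m w0 w1 F False by (auto simp: kronecker_graph_def complete_graph_def)
        qed
      qed
      thus ?thesis using F False unfolding graph_dist_def by simp
    qed
  qed
qed

lemma dist_matrix_Dk:
  assumes n: "3 \<le> n"
  shows "distance_matrix (kronecker_graph (complete_graph n) (complete_graph n)) (List.product [0..<n] [0..<n]) = Dk n"
proof (rule eq_matI)
  let ?vs = "List.product [0..<n] [0..<n]"
  have len: "length ?vs = n*n" by simp
  show dr: "dim_row (distance_matrix (kronecker_graph (complete_graph n) (complete_graph n)) ?vs) = dim_row (Dk n)"
    by (simp add: distance_matrix_def Dk_def kron_def)
  show "dim_col (distance_matrix (kronecker_graph (complete_graph n) (complete_graph n)) ?vs) = dim_col (Dk n)"
    by (simp add: distance_matrix_def Dk_def kron_def)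
  fix i j assume "i < dim_row (Dk n)" "j < dim_col (Dk n)"
  hence i: "i < n*n" and j: "j < n*n" by (auto simp: Dk_def kron_def)
  have vi: "?vs ! i = (i div n, i mod n)" using product_nth[of i "[0..<n]" "[0..<n]"] i divmod_lt[OF i] by simp
  have vj: "?vs ! j = (j div n, j mod n)" using product_nth[of j "[0..<n]" "[0..<n]"] j divmod_lt[OF j] by simp
  have "i = j \<longleftrightarrow> i div n = j div n \<and> i mod n = j mod n"
    by (metis div_mult_mod_eq)
  thus "distance_matrix (kronecker_graph (complete_graph n) (complete_graph n)) ?vs $$ (i,j) = Dk n $$ (i,j)"
    using i j divmod_lt[OF i] divmod_lt[OF j] vi vj
      dist_kk[OF n, of "i div n" "i mod n" "j div n" "j mod n"]
    by (auto simp: distance_matrix_def Dk_def kron_def Mm_def)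
qed


theorem corollary4p5:
  fixes n :: nat
  assumes "n \<ge> 3"
  shows "char_poly (distance_matrix (kronecker_graph (complete_graph n) (complete_graph n))
                                    (List.product [0..<n] [0..<n]))
         = [:- (real (n - 1) * real (n + 3)), 1:] ^ 1
           * [:- (real n - 3), 1:] ^ (2 * n - 2)
           * [:- (-3), 1:] ^ ((n - 1)^2)"
proof -
  obtain m where nm: "n = Suc m" using assms by (cases n) auto
  have n0: "n > 0" using nm by simp
  define g where "g x y = [:- (x * y + 2 * y + 2 * x), 1:]" for x y :: real
  have inner: "(\<Prod>b<n. g x (lam n b)) = g x (real n - 1) * g x (-1) ^ m" for x
    unfolding nm by (subst prod.lessThan_Suc_shift) (simp add: lam_def)
  have "char_poly (distance_matrix (kronecker_graph (complete_graph n) (complete_graph n))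
                                    (List.product [0..<n] [0..<n])) = char_poly (Dg n)"
    using dist_matrix_Dk[OF assms] char_poly_similar[OF Dk_similar[OF n0]] by simp
  also have "\<dots> = (\<Prod>a<n. \<Prod>b<n. g (lam n a) (lam n b))"
    unfolding char_poly_Dg[OF n0] g_def by simp
  also have "\<dots> = (\<Prod>a<n. g (lam n a) (real n - 1) * g (lam n a) (-1) ^ m)"
    by (simp add: inner)
  also have "\<dots> = (g (real n - 1) (real n - 1) * g (real n - 1) (-1) ^ m) * (g (-1) (real n - 1) * g (-1) (-1) ^ m) ^ m"
    unfolding nm by (subst prod.lessThan_Suc_shift) (simp add: lam_def)
  also have "\<dots> = [:- (real (n - 1) * real (n + 3)), 1:] ^ 1
           * [:- (real n - 3), 1:] ^ (2 * n - 2)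
           * [:- (-3), 1:] ^ ((n - 1)^2)"
  proof -
    have g1: "g (real n - 1) (real n - 1) = [:- (real (n - 1) * real (n + 3)), 1:]"
      unfolding g_def using n0 by (simp add: of_nat_diff algebra_simps)
    have g2: "g (real n - 1) (-1) = [:- (real n - 3), 1:]" "g (-1) (real n - 1) = [:- (real n - 3), 1:]"
      unfolding g_def by (simp_all add: algebra_simps)
    have g3: "g (-1) (-1) = [:- (-3), 1:]" unfolding g_def by simp
    have e1: "2 * n - 2 = m + m" and e2: "(n - 1)^2 = m * m" using nm by (simp_all add: power2_eq_square)
    have alg: "p1 * p2 ^ m * (p2 * p3 ^ m) ^ m = p1 ^ 1 * p2 ^ (m + m) * p3 ^ (m * m)" for p1 p2 p3 :: "real poly"
      by (simp add: power_add power_mult_distrib power_mult mult_ac)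
    show ?thesis unfolding g1 g2 g3 e1 e2 by (rule alg)
  qed
  finally show ?thesis .
qed

end
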